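(* For every $m\ge2$, $\mathbf{E}_m\subseteq\mathbf{T}_m^1$.
   Context: All varieties are varieties of monoids (signature: associative binary operation and identity constant $1$); identities are pairs of words over a countably infinite set of variables, and variables may be substituted by $1$. $\mathbf{O}$ is the variety defined by $xyt_1xt_2y \approx yxt_1xt_2y$, $xt_1xyt_2y \approx xt_1yxt_2y$, $xt_1yt_2xy \approx xt_1yt_2yx$. For $m\ge1$, $\mathbf{E}_m$ is the subvariety of $\mathbf{O}$ defined additionally by $x^{m+1}\approx x^m$ and $x^mt\approx tx^m$. For $m\ge2$, a semigroup is $m$-testable if it satisfies every semigroup identity $\mathbf{u}\approx\mathbf{v}$ (between nonempty words) such that $\mathbf{u},\mathbf{v}$ have the same prefix of length $m-1$, the same suffix of length $m-1$, and the same set of factors of length $m$. $T_m$ is a finite semigroup generating the variety of all $m$-testable semigroups; $T_m$ satisfies an identity iff these three conditions hold for it. $T_m^1$ is $T_m$ with an external identity element adjoined, and $\mathbf{T}_m^1$ is the monoid variety generated by $T_m^1$. *)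

theory Defs
  imports Main
begin

(* Words over the countably infinite set of variables nat; a monoid identity is a pair of words. *)

definition word_eval :: "(nat \<Rightarrow> 'a::monoid_mult) \<Rightarrow> nat list \<Rightarrow> 'a" where
  "word_eval \<phi> w = prod_list (map \<phi> w)"

definition monoid_sat :: "'a::monoid_mult itself \<Rightarrow> nat list \<Rightarrow> nat list \<Rightarrow> bool" where
  "monoid_sat _ u v \<longleftrightarrow> (\<forall>\<phi> :: nat \<Rightarrow> 'a. word_eval \<phi> u = word_eval \<phi> v)"

(* Variables: x = 0, y = 1, t1 = 2, t2 = 3, t = 2 *)
definition in_O :: "'a::monoid_mult itself \<Rightarrow> bool" where
  "in_O T \<longleftrightarrow>
     monoid_sat T [0,1,2,0,3,1] [1,0,2,0,3,1] \<and>
     monoid_sat T [0,2,0,1,3,1] [0,2,1,0,3,1] \<and>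
     monoid_sat T [0,2,1,3,0,1] [0,2,1,3,1,0]"

definition in_E :: "nat \<Rightarrow> 'a::monoid_mult itself \<Rightarrow> bool" where
  "in_E m T \<longleftrightarrow> in_O T \<and>
     monoid_sat T (replicate (m+1) 0) (replicate m 0) \<and>
     monoid_sat T (replicate m 0 @ [2]) (2 # replicate m 0)"

definition factors :: "nat \<Rightarrow> 'v list \<Rightarrow> 'v list set" where
  "factors k w = {take k (drop i w) | i. i + k \<le> length w}"

definition suffix_of_len :: "nat \<Rightarrow> 'v list \<Rightarrow> 'v list" where
  "suffix_of_len k w = drop (length w - k) w"

(* Semigroup identity u = v (nonempty words) holding in T_m, i.e. in all m-testable semigroups.
   Prefix/suffix of length m-1 of a shorter word is the word itself. *)
definition testable_sat :: "nat \<Rightarrow> nat list \<Rightarrow> nat list \<Rightarrow> bool" where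
  "testable_sat m u v \<longleftrightarrow> u \<noteq> [] \<and> v \<noteq> [] \<and>
     take (m-1) u = take (m-1) v \<and>
     suffix_of_len (m-1) u = suffix_of_len (m-1) v \<and>
     factors m u = factors m v"

(* Monoid identity u = v holds in T_m^1: for every set X of variables sent to the adjoined 1
   (the others to T_m), the resulting words are both empty, or both nonempty and the
   semigroup identity holds in T_m. *)
definition T1_sat :: "nat \<Rightarrow> nat list \<Rightarrow> nat list \<Rightarrow> bool" where
  "T1_sat m u v \<longleftrightarrow>
     (\<forall>X :: nat set.
        let u' = filter (\<lambda>x. x \<notin> X) u; v' = filter (\<lambda>x. x \<notin> X) v in
        (u' = [] \<and> v' = []) \<or> testable_sat m u' v')"

end

theory Submission
  imports Defs
begin

abbreviation ev where "ev \<phi> w \<equiv> word_eval \<phi> w"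

lemma ev_simps[simp]:
  "word_eval \<phi> [] = 1"
  "word_eval \<phi> (x#xs) = \<phi> x * word_eval \<phi> xs"
  "word_eval \<phi> (xs@ys) = word_eval \<phi> xs * word_eval \<phi> ys"
  "word_eval \<phi> (replicate n x) = \<phi> x ^ n"
  by (simp_all add: word_eval_def)


definition infx :: "'b list \<Rightarrow> 'b list \<Rightarrow> bool" where
  "infx w A \<longleftrightarrow> (\<exists>p s. A = p @ w @ s)"

lemma infx_idx: "infx w A \<longleftrightarrow> (\<exists>i. i + length w \<le> length A \<and> w = take (length w) (drop i A))"
proof
  assume "infx w A"
  then obtain p s where "A = p @ w @ s" by (auto simp: infx_def)
  then show "\<exists>i. i + length w \<le> length A \<and> w = take (length w) (drop i A)"
    by (intro exI[of _ "length p"]) simp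
next
  assume "\<exists>i. i + length w \<le> length A \<and> w = take (length w) (drop i A)"
  then obtain i where i: "i + length w \<le> length A" "w = take (length w) (drop i A)" by blast
  have "A = take i A @ take (length w) (drop i A) @ drop (length w) (drop i A)"
    by (simp only: append_take_drop_id)
  then show "infx w A" unfolding infx_def using i(2) by metis
qed

lemma factors_short: "length A < m \<Longrightarrow> factors m A = {}"
  by (auto simp: factors_def)

lemma testable_sym: "testable_sat m A B \<Longrightarrow> testable_sat m B A"
  by (auto simp: testable_sat_def)

lemma testable_short:
  assumes "testable_sat m A B" "length A < m"
  shows "A = B"
proof -
  have "factors m B = {}" using assms by (simp add: testable_sat_def factors_short)
  have lB: "length B < m"
  proof (rule ccontr)
    assume "\<not> length B < m"
    then have "take m (drop 0 B) \<in> factors m B" unfolding factors_def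
      by (intro CollectI exI[of _ 0]) simp
    then show False using \<open>factors m B = {}\<close> by simp
  qed
  have "take (m-1) A = take (m-1) B" using assms(1) by (simp add: testable_sat_def)
  then show ?thesis using assms(2) lB by simp
qed

lemma infix_transfer:
  assumes "testable_sat m A B" "m \<le> length A" "infx w A" "length w \<le> m"
  shows "infx w B"
proof -
  obtain p s where A: "A = p @ w @ s" using assms(3) by (auto simp: infx_def)
  define i where "i = min (length p) (length A - m)"
  define f where "f = take m (drop i A)"
  have im: "i + m \<le> length A" using assms(2) by (simp add: i_def)
  have "f \<in> factors m A" unfolding factors_def f_def using im by blast
  then have "f \<in> factors m B" using assms(1) by (simp add: testable_sat_def)
  then obtain j where j: "f = take m (drop j B)" "j + m \<le> length B"
    unfolding factors_def by blast
  define k where "k = length p - i"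
  have ki: "i + k = length p" "k + length w \<le> m"
    using A assms(4) by (auto simp: k_def i_def)
  have "take (length w) (drop k f) = take (length w) (drop (i+k) A)"
    unfolding f_def using ki by (simp add: drop_take min_def add.commute)
  also have "\<dots> = w" using ki A by simp
  finally have w1: "w = take (length w) (drop k f)" by simp
  have "take (length w) (drop k f) = take (length w) (drop (j+k) B)"
    unfolding j(1) using ki by (simp add: drop_take min_def add.commute)
  then have "w = take (length w) (drop (j+k) B)" using w1 by simp
  moreover have "j + k + length w \<le> length B" using j(2) ki by simp
  ultimately show ?thesis unfolding infx_idx by blast
qed

lemma prefix_transfer:
  assumes "testable_sat m A B" "A = q @ r" "length q \<le> m - 1"
  shows "\<exists>r'. B = q @ r'"
proof -
  have "take (m-1) A = take (m-1) B" using assms(1) by (simp add: testable_sat_def)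
  then have "take (length q) (take (m-1) A) = take (length q) (take (m-1) B)" by simp
  then have "q = take (length q) B" using assms(2,3) by (simp add: min_def)
  then show ?thesis by (metis append_take_drop_id)
qed

lemma suffix_transfer:
  assumes "testable_sat m A B" "A = r @ q" "length q \<le> m - 1" "m - 1 \<le> length A" "m - 1 \<le> length B"
  shows "\<exists>r'. B = r' @ q"
proof -
  have e: "drop (length A - (m-1)) A = drop (length B - (m-1)) B"
    using assms(1) by (simp add: testable_sat_def suffix_of_len_def)
  have "q = drop (length A - length q) A" using assms(2) by simp
  also have "\<dots> = drop (m - 1 - length q + (length A - (m-1))) A"
  proof -
    have "m - 1 - length q + (length A - (m-1)) = length A - length q" using assms(3,4) by linarith
    then show ?thesis by simp
  qed
  also have "\<dots> = drop (m - 1 - length q) (drop (length A - (m-1)) A)"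
    by (simp only: drop_drop)
  also have "\<dots> = drop (m - 1 - length q) (drop (length B - (m-1)) B)" using e by simp
  also have "\<dots> = drop (m - 1 - length q + (length B - (m-1))) B"
    by (simp only: drop_drop)
  also have "\<dots> = drop (length B - length q) B"
  proof -
    have "m - 1 - length q + (length B - (m-1)) = length B - length q" using assms(3,5) by linarith
    then show ?thesis by simp
  qed
  finally have "q = drop (length B - length q) B" .
  then show ?thesis by (metis append_take_drop_id)
qed


definition aft :: "'b set \<Rightarrow> 'b \<Rightarrow> 'b list \<Rightarrow> 'b list" where
  "aft L t w = takeWhile (\<lambda>z. z \<notin> L) (tl (dropWhile (\<lambda>z. z \<noteq> t) w))"

lemma aft_split: "t \<notin> set p \<Longrightarrow> aft L t (p @ t # q) = takeWhile (\<lambda>z. z \<notin> L) q"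
  unfolding aft_def by (subst dropWhile_append2) auto

lemma aft_notin: "t \<notin> set w \<Longrightarrow> aft L t w = []"
proof -
  assume "t \<notin> set w"
  then have h: "dropWhile (\<lambda>z. z \<noteq> t) w = []" by (induction w) auto
  show ?thesis unfolding aft_def h by simp
qed

lemma filter_takeWhile:
  "(\<And>z. \<not> Q z \<Longrightarrow> P z) \<Longrightarrow> filter P (takeWhile Q w) = takeWhile Q (filter P w)"
  by (induction w) auto

lemma filter_dropWhile:
  "P t \<Longrightarrow> filter P (dropWhile (\<lambda>z. z \<noteq> t) w) = dropWhile (\<lambda>z. z \<noteq> t) (filter P w)"
  by (induction w) auto

lemma filter_tl_dropWhile:
  assumes "P t"
  shows "filter P (tl (dropWhile (\<lambda>z. z \<noteq> t) w)) = tl (filter P (dropWhile (\<lambda>z. z \<noteq> t) w))"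
proof (cases "dropWhile (\<lambda>z. z \<noteq> t) w")
  case Nil then show ?thesis unfolding Nil by simp
next
  case (Cons a r)
  then have "a = t" using hd_dropWhile[of "\<lambda>z. z \<noteq> t" w] by simp
  then show ?thesis using Cons assms by simp
qed

lemma filter_aft:
  assumes "P t" "\<And>z. z \<in> L \<Longrightarrow> P z"
  shows "filter P (aft L t w) = aft L t (filter P w)"
proof -
  have "filter P (aft L t w) = takeWhile (\<lambda>z. z \<notin> L) (filter P (tl (dropWhile (\<lambda>z. z \<noteq> t) w)))"
    unfolding aft_def by (rule filter_takeWhile) (use assms in auto)
  also have "\<dots> = aft L t (filter P w)"
    unfolding aft_def using assms by (simp add: filter_tl_dropWhile filter_dropWhile)
  finally show ?thesis .
qed

lemma filter_split:
  "filter P w = xs @ ys \<Longrightarrow> \<exists>a b. w = a @ b \<and> filter P a = xs \<and> filter P b = ys"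
proof (induction w arbitrary: xs)
  case Nil then show ?case by simp
next
  case (Cons c w)
  show ?case
  proof (cases "P c")
    case True
    show ?thesis
    proof (cases xs)
      case Nil
      then show ?thesis using Cons.prems \<open>P c\<close> by (intro exI[of _ "[]"] exI[of _ "c # w"]) auto
    next
      case (Cons d xs')
      then have "c = d" "filter P w = xs' @ ys" using Cons.prems \<open>P c\<close> by auto
      then obtain a b where "w = a @ b" "filter P a = xs'" "filter P b = ys"
        using Cons.IH by blast
      then show ?thesis using \<open>P c\<close> \<open>c = d\<close> Cons by (intro exI[of _ "c # a"] exI[of _ b]) auto
    qed
  next
    case False
    then have "filter P w = xs @ ys" using Cons.prems by simp
    then obtain a b where "w = a @ b" "filter P a = xs" "filter P b = ys"
      using Cons.IH by blast
    then show ?thesis using False by (intro exI[of _ "c # a"] exI[of _ b]) auto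
  qed
qed

lemma dist_eq:
  assumes "distinct A" "distinct B" "set A = set B" "A \<noteq> [] \<Longrightarrow> hd A = hd B"
    "\<And>a b. infx [a,b] A \<Longrightarrow> infx [a,b] B"
  shows "A = B"
  using assms
proof (induction A arbitrary: B)
  case Nil then show ?case by simp
next
  case (Cons a A')
  obtain B' where B: "B = a # B'"
    using Cons.prems(3,4) by (cases B) auto
  show ?case
  proof (cases A')
    case Nil
    then have "set B' \<subseteq> {a}" using Cons.prems(3) B by auto
    then have "B' = []" using Cons.prems(2) B by (cases B') auto
    then show ?thesis using Nil B by simp
  next
    case (Cons b A'')
    have "infx [a,b] (a # A')" unfolding infx_def using Cons by (intro exI[of _ "[]"] exI[of _ "A''"]) auto
    then have "infx [a,b] B" using Cons.prems(5) by blast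
    then obtain p s where ps: "B = p @ [a,b] @ s" unfolding infx_def by blast
    have "p = []"
    proof (rule ccontr)
      assume "p \<noteq> []"
      then obtain p' where "p = a # p'" using ps B by (cases p) auto
      then show False using ps B Cons.prems(2) by auto
    qed
    then have B': "B' = b # s" using ps B by simp
    have "A' = B'"
    proof (rule Cons.IH)
      show "distinct A'" "distinct B'" using Cons.prems B by auto
      show "set A' = set B'" using Cons.prems(1,2,3) B by auto
      show "hd A' = hd B'" if "A' \<noteq> []" using B' Cons by simp
      fix c d assume "infx [c,d] A'"
      then obtain p1 s1 where p1: "A' = p1 @ [c,d] @ s1" unfolding infx_def by blast
      have c: "c \<in> set A'" using p1 by simp
      have "a # A' = (a # p1) @ [c,d] @ s1" using p1 by simp
      then have "infx [c,d] (a # A')" unfolding infx_def by blast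
      then have "infx [c,d] B" using Cons.prems(5) by blast
      then obtain p2 s2 where p2: "B = p2 @ [c,d] @ s2" unfolding infx_def by blast
      have "c \<noteq> a" using c Cons.prems(1) by auto
      then have "p2 \<noteq> []" using p2 B by auto
      then obtain p3 where "p2 = a # p3" using p2 B by (cases p2) auto
      then show "infx [c,d] B'" using p2 B unfolding infx_def by auto
    qed
    then show ?thesis using B by simp
  qed
qed


lemma count_le1_notin:
  assumes "count_list (p @ t # q) t \<le> 1" shows "t \<notin> set p"
proof
  assume "t \<in> set p"
  then have "count_list p t \<ge> 1" by (metis count_list_0_iff less_one not_less)
  then show False using assms by simp
qed

lemma runs:
  assumes m2: "2 \<le> m" and AB: "A = B \<or> testable_sat m A B"
    and lA: "\<forall>z\<in>set A. z = y \<or> z \<in> L" and lB: "\<forall>z\<in>set B. z = y \<or> z \<in> L" and yL: "y \<notin> L"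
    and noA: "\<not> infx (replicate m y) A" and noB: "\<not> infx (replicate m y) B"
    and cB: "\<forall>t\<in>L. count_list B t \<le> 1" and LA: "\<forall>t\<in>L. t \<in> set A"
  shows "takeWhile (\<lambda>z. z \<notin> L) A = takeWhile (\<lambda>z. z \<notin> L) B \<and> (\<forall>t\<in>L. aft L t A = aft L t B)"
proof (cases "A = B")
  case True then show ?thesis by simp
next
  case False
  then have T: "testable_sat m A B" using AB by simp
  have longA: "m \<le> length A" using testable_short[OF T] False by (cases "m \<le> length A"; cases "m \<le> length B") auto
  have longB: "m \<le> length B" using testable_short[OF testable_sym[OF T]] False by (cases "m \<le> length A"; cases "m \<le> length B") auto
  have infB: "infx W B" if "infx W A" "length W \<le> m" for W
    using infix_transfer[OF T longA that] .
  have notrep: "\<not> (\<exists>p s. B = p @ replicate m y @ s)" using noB unfolding infx_def by blast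
  have part1: "takeWhile (\<lambda>z. z \<notin> L) A = takeWhile (\<lambda>z. z \<notin> L) B"
  proof -
    define I where "I = takeWhile (\<lambda>z. z \<notin> L) A"
    define q where "q = dropWhile (\<lambda>z. z \<notin> L) A"
    have A: "A = I @ q" unfolding I_def q_def by simp
    have Iy: "\<forall>z\<in>set I. z = y" using lA unfolding I_def by (auto dest: set_takeWhileD)
    have IQ: "\<forall>z\<in>set I. z \<notin> L" using Iy yL by auto
    have Irep: "I = replicate (length I) y" using Iy by (simp add: replicate_length_same)
    have cI: "length I < m"
    proof (rule ccontr)
      assume "\<not> length I < m"
      then have "I = replicate m y @ replicate (length I - m) y"
        using Irep replicate_add[of m "length I - m" y] by simp
      then have "A = [] @ replicate m y @ (replicate (length I - m) y @ q)" using A by simp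
      then show False using noA unfolding infx_def by blast
    qed
    show ?thesis
    proof (cases "length I \<le> m - 2")
      case True
      have "q \<noteq> []"
      proof
        assume "q = []"
        then have "length A = length I" using A by simp
        then show False using True longA m2 by linarith
      qed
      then obtain s q' where q: "q = s # q'" by (cases q) auto
      have "s \<in> L" using hd_dropWhile[of "\<lambda>z. z \<notin> L" A] q unfolding q_def by simp
      have A2: "A = (I @ [s]) @ q'" using A q by simp
      have "length (I @ [s]) \<le> m - 1" using True m2 by simp
      then obtain r' where "B = (I @ [s]) @ r'"
        using prefix_transfer[OF T A2] by blast
      then have "takeWhile (\<lambda>z. z \<notin> L) B = I" using IQ \<open>s \<in> L\<close> by simp
      then show ?thesis unfolding I_def by simp
    next
      case False
      then have lI: "length I = m - 1" using cI by linarith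
      then have "length I \<le> m - 1" by simp
      then obtain r' where B: "B = I @ r'" using prefix_transfer[OF T A] by blast
      have "takeWhile (\<lambda>z. z \<notin> L) r' = []"
      proof (rule ccontr)
        assume "takeWhile (\<lambda>z. z \<notin> L) r' \<noteq> []"
        then obtain z r'' where r': "r' = z # r''" "z \<notin> L" by (cases r') (auto split: if_splits)
        then have "z = y" using lB B by auto
        have "I @ [y] = replicate m y" using Irep lI m2
          by (cases m) (simp_all add: replicate_append_same)
        then have "B = [] @ replicate m y @ r''" using B r' \<open>z = y\<close> by simp
        then show False using notrep by blast
      qed
      then have "takeWhile (\<lambda>z. z \<notin> L) B = I" using B IQ by simp
      then show ?thesis unfolding I_def by simp
    qed
  qed
  have part2: "aft L t A = aft L t B" if tL: "t \<in> L" for t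
  proof -
    have "t \<in> set A" using LA tL by blast
    then obtain p q where A: "A = p @ t # q" and tp: "t \<notin> set p" by (meson split_list_first)
    define R where "R = takeWhile (\<lambda>z. z \<notin> L) q"
    define q2 where "q2 = dropWhile (\<lambda>z. z \<notin> L) q"
    have q: "q = R @ q2" unfolding R_def q2_def by simp
    have aA: "aft L t A = R" using A tp aft_split unfolding R_def by metis
    have Ry: "\<forall>z\<in>set R. z = y" using lA A unfolding R_def by (auto dest: set_takeWhileD)
    have RQ: "\<forall>z\<in>set R. z \<notin> L" using Ry yL by auto
    have Rrep: "R = replicate (length R) y" using Ry by (simp add: replicate_length_same)
    have cR: "length R < m"
    proof (rule ccontr)
      assume "\<not> length R < m"
      then have "R = replicate m y @ replicate (length R - m) y"
        using Rrep replicate_add[of m "length R - m" y] by simp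
      then have "A = (p @ [t]) @ replicate m y @ (replicate (length R - m) y @ q2)" using A q by simp
      then show False using noA unfolding infx_def by blast
    qed
    have aB: "aft L t B = R @ takeWhile (\<lambda>z. z \<notin> L) q'" if B: "B = p' @ t # R @ q'" for p' q'
    proof -
      have "t \<notin> set p'" using cB tL B count_le1_notin by metis
      then have "aft L t B = takeWhile (\<lambda>z. z \<notin> L) (R @ q')" using B aft_split by metis
      then show ?thesis using RQ by simp
    qed
    show ?thesis
    proof (cases "length R \<le> m - 2")
      case True
      show ?thesis
      proof (cases q2)
        case (Cons s q3)
        have "s \<in> L" using hd_dropWhile[of "\<lambda>z. z \<notin> L" q] Cons unfolding q2_def by simp
        have "A = p @ (t # R @ [s]) @ q3" using A q Cons by simp
        then have "infx (t # R @ [s]) A" unfolding infx_def by blast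
        then have "infx (t # R @ [s]) B" using infB True m2 by simp
        then obtain p' s' where "B = p' @ t # R @ (s # s')" unfolding infx_def by auto
        then have "aft L t B = R" using aB \<open>s \<in> L\<close> by simp
        then show ?thesis using aA by simp
      next
        case Nil
        have A2: "A = p @ (t # R)" using A q Nil by simp
        have "length (t # R) \<le> m - 1" using True m2 by simp
        then obtain r' where "B = r' @ (t # R)"
          using suffix_transfer[OF T A2] longA longB by (meson diff_le_self le_trans)
        then have "B = r' @ t # R @ []" by simp
        then have "aft L t B = R @ takeWhile (\<lambda>z. z \<notin> L) []" by (rule aB)
        then have "aft L t B = R" by simp
        then show ?thesis using aA by simp
      qed
    next
      case False
      then have lR: "length R = m - 1" using cR by linarith
      have "A = p @ (t # R) @ q2" using A q by simp
      then have "infx (t # R) A" unfolding infx_def by blast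
      then have "infx (t # R) B" using infB lR m2 by simp
      then obtain p' q' where B: "B = p' @ t # R @ q'" unfolding infx_def by auto
      have "takeWhile (\<lambda>z. z \<notin> L) q' = []"
      proof (rule ccontr)
        assume "takeWhile (\<lambda>z. z \<notin> L) q' \<noteq> []"
        then obtain z r'' where r': "q' = z # r''" "z \<notin> L" by (cases q') (auto split: if_splits)
        then have "z = y" using lB B by auto
        have "R @ [y] = replicate m y" using Rrep lR m2
          by (cases m) (simp_all add: replicate_append_same)
        then have "B = (p' @ [t]) @ replicate m y @ r''" using B r' \<open>z = y\<close>
          by simp
        then show False using notrep by blast
      qed
      then have "aft L t B = R" using aB[OF B] by simp
      then show ?thesis using aA by simp
    qed
  qed
  show ?thesis using part1 part2 by blast
qed


lemma aft_skip: "t \<notin> set p \<Longrightarrow> aft L t (p @ w) = aft L t w"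
  unfolding aft_def by (subst dropWhile_append2) auto

lemma count_list_filter: "count_list (filter P xs) x = (if P x then count_list xs x else 0)"
  by (induction xs) auto

lemma count_rep: "count_list (replicate n y) x = (if x = y then n else 0)"
  by (induction n) auto

lemma count_list_len: "count_list xs x = length (filter (\<lambda>z. z = x) xs)"
  by (induction xs) auto

lemma distinct_count: "(\<And>x. count_list xs x \<le> 1) \<Longrightarrow> distinct xs"
proof (induction xs)
  case Nil then show ?case by simp
next
  case (Cons a xs)
  have "count_list xs a = 0" using Cons.prems[of a] by simp
  then have "a \<notin> set xs" by (simp add: count_list_0_iff)
  moreover have "distinct xs"
  proof (rule Cons.IH)
    fix x show "count_list xs x \<le> 1" using Cons.prems[of x] by (auto split: if_splits)
  qed
  ultimately show ?case by simp
qed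

lemma T1_filter:
  assumes "T1_sat m u v"
  shows "filter P u = filter P v \<or> testable_sat m (filter P u) (filter P v)"
proof -
  have "let u' = filter (\<lambda>x. x \<notin> {z. \<not> P z}) u; v' = filter (\<lambda>x. x \<notin> {z. \<not> P z}) v in
        (u' = [] \<and> v' = []) \<or> testable_sat m u' v'"
    using assms unfolding T1_sat_def by blast
  then show ?thesis by (auto simp: Let_def)
qed

lemma T1_del:
  assumes "T1_sat m u v"
  shows "T1_sat m (filter (\<lambda>z. z \<noteq> y) u) (filter (\<lambda>z. z \<noteq> y) v)"
  unfolding T1_sat_def
proof
  fix X :: "nat set"
  have "let u' = filter (\<lambda>x. x \<notin> insert y X) u; v' = filter (\<lambda>x. x \<notin> insert y X) v in
        (u' = [] \<and> v' = []) \<or> testable_sat m u' v'"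
    using assms unfolding T1_sat_def by blast
  moreover have "\<And>w. filter (\<lambda>x. x \<notin> X) (filter (\<lambda>z. z \<noteq> y) w) = filter (\<lambda>x. x \<notin> insert y X) w"
    by (simp add: filter_filter conj_commute)
  ultimately show "let u' = filter (\<lambda>x. x \<notin> X) (filter (\<lambda>z. z \<noteq> y) u);
                       v' = filter (\<lambda>x. x \<notin> X) (filter (\<lambda>z. z \<noteq> y) v)
                   in u' = [] \<and> v' = [] \<or> testable_sat m u' v'" by simp
qed

lemma AB_infx:
  assumes "A = B \<or> testable_sat m A B" "infx W A" "length W = m"
  shows "infx W B"
proof (cases "A = B")
  case True then show ?thesis using assms by simp
next
  case False
  then have T: "testable_sat m A B" using assms by simp
  have "m \<le> length A" using assms(2,3) unfolding infx_def by auto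
  then show ?thesis using infix_transfer[OF T _ assms(2)] assms(3) by simp
qed

locale EM =
  fixes m :: nat and T :: "'a::monoid_mult itself"
  assumes m2: "2 \<le> m" and inE: "in_E m T"
begin

lemma O1: "(a::'a)*b*c*a*d*b = b*a*c*a*d*b"
proof -
  have "monoid_sat T [0,1,2,0,3,1] [1,0,2,0,3,1]" using inE by (simp add: in_E_def in_O_def)
  then have "word_eval (\<lambda>i. if i = 0 then a else if i = 1 then b else if i = 2 then c else d) [0,1,2,0,3,1]
    = word_eval (\<lambda>i. if i = 0 then a else if i = 1 then b else if i = 2 then c else d) [1,0,2,0,3,1]"
    unfolding monoid_sat_def by blast
  then show ?thesis by (simp add: mult.assoc)
qed

lemma O2: "(a::'a)*c*a*b*d*b = a*c*b*a*d*b"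
proof -
  have "monoid_sat T [0,2,0,1,3,1] [0,2,1,0,3,1]" using inE by (simp add: in_E_def in_O_def)
  then have "word_eval (\<lambda>i. if i = 0 then a else if i = 1 then b else if i = 2 then c else d) [0,2,0,1,3,1]
    = word_eval (\<lambda>i. if i = 0 then a else if i = 1 then b else if i = 2 then c else d) [0,2,1,0,3,1]"
    unfolding monoid_sat_def by blast
  then show ?thesis by (simp add: mult.assoc)
qed

lemma O3: "(a::'a)*c*b*d*a*b = a*c*b*d*b*a"
proof -
  have "monoid_sat T [0,2,1,3,0,1] [0,2,1,3,1,0]" using inE by (simp add: in_E_def in_O_def)
  then have "word_eval (\<lambda>i. if i = 0 then a else if i = 1 then b else if i = 2 then c else d) [0,2,1,3,0,1]
    = word_eval (\<lambda>i. if i = 0 then a else if i = 1 then b else if i = 2 then c else d) [0,2,1,3,1,0]"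
    unfolding monoid_sat_def by blast
  then show ?thesis by (simp add: mult.assoc)
qed

lemma E1: "(a::'a)^m * a = a^m"
proof -
  have "monoid_sat T (replicate (m+1) 0) (replicate m 0)" using inE by (simp add: in_E_def)
  then have "word_eval (\<lambda>i. a) (replicate (m+1) 0) = word_eval (\<lambda>i. a) (replicate m 0)"
    unfolding monoid_sat_def by blast
  then show ?thesis by (simp add: power_commutes)
qed

lemma E2: "(a::'a)^m * c = c * a^m"
proof -
  have "monoid_sat T (replicate m 0 @ [2]) (2 # replicate m 0)" using inE by (simp add: in_E_def)
  then have "word_eval (\<lambda>i. if i = 0 then a else c) (replicate m 0 @ [2]) = word_eval (\<lambda>i. if i = 0 then a else c) (2 # replicate m 0)"
    unfolding monoid_sat_def by blast
  then show ?thesis by simp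
qed

lemma O1s: "(a::'a)*(b*(c*(a*(d*(b*S))))) = b*(a*(c*(a*(d*(b*S)))))"
  using arg_cong[OF O1[of a b c d], of "\<lambda>z. z*S"] by (simp add: mult.assoc)
lemma O2s: "(a::'a)*(c*(a*(b*(d*(b*S))))) = a*(c*(b*(a*(d*(b*S)))))"
  using arg_cong[OF O2[of a c b d], of "\<lambda>z. z*S"] by (simp add: mult.assoc)
lemma O3s: "(a::'a)*(c*(b*(d*(a*(b*S))))) = a*(c*(b*(d*(b*(a*S)))))"
  using arg_cong[OF O3[of a c b d], of "\<lambda>z. z*S"] by (simp add: mult.assoc)

lemma swap:
  fixes \<phi> :: "nat \<Rightarrow> 'a"
  assumes "count_list (p @ x # y # s) x \<ge> 2" "count_list (p @ x # y # s) y \<ge> 2"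
  shows "ev \<phi> (p @ x # y # s) = ev \<phi> (p @ y # x # s)"
proof (cases "x = y")
  case True then show ?thesis by simp
next
  case False
  have hx: "x \<in> set p \<or> x \<in> set s"
  proof -
    have "count_list p x + count_list s x \<ge> 1" using assms(1) False by auto
    then show ?thesis by (cases "x \<in> set p"; cases "x \<in> set s") auto
  qed
  have hy: "y \<in> set p \<or> y \<in> set s"
  proof -
    have "count_list p y + count_list s y \<ge> 1" using assms(2) False by auto
    then show ?thesis by (cases "y \<in> set p"; cases "y \<in> set s") auto
  qed
  show ?thesis
  proof (cases "x \<in> set p")
    case xp: True
    then obtain p1 p2 where p: "p = p1 @ x # p2" by (meson split_list)
    show ?thesis
    proof (cases "y \<in> set s")
      case True
      then obtain s1 s2 where s: "s = s1 @ y # s2" by (meson split_list)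
      show ?thesis unfolding p s
        using O2s[of "\<phi> x" "ev \<phi> p2" "\<phi> y" "ev \<phi> s1" "ev \<phi> s2"] by (simp add: mult.assoc)
    next
      case False
      with hy have "y \<in> set p" by simp
      then have "y \<in> set p1 \<or> y \<in> set p2" using p \<open>x \<noteq> y\<close> by auto
      then show ?thesis
      proof
        assume "y \<in> set p2"
        then obtain p3 p4 where p2: "p2 = p3 @ y # p4" by (meson split_list)
        show ?thesis unfolding p p2
          using O3s[of "\<phi> x" "ev \<phi> p3" "\<phi> y" "ev \<phi> p4" "ev \<phi> s"] by (simp add: mult.assoc)
      next
        assume "y \<in> set p1"
        then obtain p3 p4 where p1: "p1 = p3 @ y # p4" by (meson split_list)
        show ?thesis unfolding p p1
          using O3s[of "\<phi> y" "ev \<phi> p4" "\<phi> x" "ev \<phi> p2" "ev \<phi> s"] by (simp add: mult.assoc)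
      qed
    qed
  next
    case xnp: False
    with hx have "x \<in> set s" by simp
    then obtain s1 s2 where s: "s = s1 @ x # s2" by (meson split_list)
    show ?thesis
    proof (cases "y \<in> set p")
      case True
      then obtain p1 p2 where p: "p = p1 @ y # p2" by (meson split_list)
      show ?thesis unfolding p s
        using O2s[of "\<phi> y" "ev \<phi> p2" "\<phi> x" "ev \<phi> s1" "ev \<phi> s2"] by (simp add: mult.assoc)
    next
      case False
      with hy have "y \<in> set s" by simp
      then have "y \<in> set s1 \<or> y \<in> set s2" using s \<open>x \<noteq> y\<close> by auto
      then show ?thesis
      proof
        assume "y \<in> set s2"
        then obtain s3 s4 where s2: "s2 = s3 @ y # s4" by (meson split_list)
        show ?thesis unfolding s s2
          using O1s[of "\<phi> x" "\<phi> y" "ev \<phi> s1" "ev \<phi> s3" "ev \<phi> s4"] by (simp add: mult.assoc)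
      next
        assume "y \<in> set s1"
        then obtain s3 s4 where s1: "s1 = s3 @ y # s4" by (meson split_list)
        show ?thesis unfolding s s1
          using O1s[of "\<phi> y" "\<phi> x" "ev \<phi> s3" "ev \<phi> s4" "ev \<phi> s2"] by (simp add: mult.assoc)
      qed
    qed
  qed
qed

lemma move:
  fixes \<phi> :: "nat \<Rightarrow> 'a"
  assumes "\<forall>z \<in> set (y # b1). count_list (p @ b1 @ y # s) z \<ge> 2"
  shows "ev \<phi> (p @ b1 @ y # s) = ev \<phi> (p @ y # b1 @ s)"
  using assms
proof (induction b1 arbitrary: p)
  case Nil then show ?case by simp
next
  case (Cons c b1)
  have "ev \<phi> (p @ (c # b1) @ y # s) = ev \<phi> ((p @ [c]) @ b1 @ y # s)" by simp
  also have "\<dots> = ev \<phi> ((p @ [c]) @ y # b1 @ s)"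
    by (rule Cons.IH) (use Cons.prems in auto)
  also have "\<dots> = ev \<phi> (p @ c # y # (b1 @ s))" by simp
  also have "\<dots> = ev \<phi> (p @ y # c # (b1 @ s))"
    by (rule swap) (use Cons.prems in auto)
  finally show ?case by simp
qed

lemma perm:
  fixes \<phi> :: "nat \<Rightarrow> 'a"
  assumes "\<forall>x. count_list b x = count_list b' x" "\<forall>z\<in>set b. count_list (p@b@s) z \<ge> 2"
  shows "ev \<phi> (p@b@s) = ev \<phi> (p@b'@s)"
  using assms
proof (induction b' arbitrary: p b)
  case Nil
  then have "b = []" by (metis count_list_0_iff list.set_intros(1) list.exhaust count_list.simps(1))
  then show ?case by simp
next
  case (Cons y b'')
  have "count_list b y \<ge> 1" using Cons.prems(1) by simp
  then have "y \<in> set b" by (metis count_notin not_one_le_zero)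
  then obtain b1 b2 where b: "b = b1 @ y # b2" by (meson split_list)
  have "ev \<phi> (p@b@s) = ev \<phi> (p @ b1 @ y # (b2 @ s))" using b by simp
  also have "\<dots> = ev \<phi> (p @ y # b1 @ (b2 @ s))"
    by (rule move) (use Cons.prems b in auto)
  also have "\<dots> = ev \<phi> ((p @ [y]) @ (b1 @ b2) @ s)" by simp
  also have "\<dots> = ev \<phi> ((p @ [y]) @ b'' @ s)"
  proof (rule Cons.IH)
    show "\<forall>x. count_list (b1 @ b2) x = count_list b'' x"
    proof
      fix x show "count_list (b1 @ b2) x = count_list b'' x"
        using Cons.prems(1) b by (auto dest: spec[of _ x] split: if_splits)
    qed
    show "\<forall>z\<in>set (b1 @ b2). 2 \<le> count_list ((p @ [y]) @ (b1 @ b2) @ s) z"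
    proof
      fix z assume "z \<in> set (b1 @ b2)"
      then have "z \<in> set b" using b by auto
      then have "2 \<le> count_list (p@b@s) z" using Cons.prems(2) by blast
      moreover have "count_list ((p @ [y]) @ (b1 @ b2) @ s) z = count_list (p@b@s) z"
        using b by simp
      ultimately show "2 \<le> count_list ((p @ [y]) @ (b1 @ b2) @ s) z" by simp
    qed
  qed
  finally show ?case by simp
qed

lemma absorb:
  fixes \<phi> :: "nat \<Rightarrow> 'a"
  shows "\<phi> y ^ m * ev \<phi> w = \<phi> y ^ m * ev \<phi> (filter (\<lambda>z. z \<noteq> y) w)"
proof (induction w)
  case Nil then show ?case by simp
next
  case (Cons z w)
  show ?case
  proof (cases "z = y")
    case True
    then show ?thesis using Cons E1[of "\<phi> y"] by (simp add: mult.assoc[symmetric])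
  next
    case False
    have "\<phi> y ^ m * ev \<phi> (z # w) = \<phi> z * (\<phi> y ^ m * ev \<phi> w)"
      by (simp, metis E2 mult.assoc)
    also have "\<dots> = \<phi> z * (\<phi> y ^ m * ev \<phi> (filter (\<lambda>z. z \<noteq> y) w))" using Cons by simp
    also have "\<dots> = \<phi> y ^ m * ev \<phi> (filter (\<lambda>x. x \<noteq> y) (z # w))"
      using False by (simp, metis E2 mult.assoc)
    finally show ?thesis .
  qed
qed

lemma reduce:
  fixes \<phi> :: "nat \<Rightarrow> 'a"
  shows "ev \<phi> (p @ replicate m y @ r) = \<phi> y ^ m * ev \<phi> (filter (\<lambda>z. z \<noteq> y) (p @ r))"
proof -
  have "ev \<phi> (p @ replicate m y @ r) = \<phi> y ^ m * ev \<phi> (p @ r)"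
    by (simp, metis E2 mult.assoc)
  also have "\<dots> = \<phi> y ^ m * ev \<phi> (filter (\<lambda>z. z \<noteq> y) (p @ r))" by (rule absorb)
  finally show ?thesis .
qed

lemma blockE:
  fixes \<phi> :: "nat \<Rightarrow> 'a" and L :: "nat set"
  assumes "\<forall>t\<in>L. count_list u t \<le> 1" "\<forall>t\<in>L. count_list v t \<le> 1"
   "filter (\<lambda>z. z\<in>L) u = filter (\<lambda>z. z\<in>L) v"
   "\<forall>x. count_list (takeWhile (\<lambda>z. z\<notin>L) u) x = count_list (takeWhile (\<lambda>z. z\<notin>L) v) x"
   "\<forall>t\<in>L. \<forall>x. count_list (aft L t u) x = count_list (aft L t v) x"
   "\<forall>z\<in>set u. z \<notin> L \<longrightarrow> count_list (p@u) z \<ge> 2"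
  shows "ev \<phi> (p@u) = ev \<phi> (p@v)"
  using assms
proof (induction "length u" arbitrary: u v p rule: less_induct)
  case less
  show ?case
  proof (cases "\<exists>z\<in>set u. z \<in> L")
    case False
    then have "filter (\<lambda>z. z\<in>L) u = []" by (simp add: filter_empty_conv)
    then have "filter (\<lambda>z. z\<in>L) v = []" using less.prems(3) by simp
    then have vL: "\<forall>z\<in>set v. z \<notin> L" by (simp add: filter_empty_conv)
    have tu: "takeWhile (\<lambda>z. z\<notin>L) u = u" using False by (simp add: takeWhile_eq_all_conv)
    have tv: "takeWhile (\<lambda>z. z\<notin>L) v = v" using vL by (simp add: takeWhile_eq_all_conv)
    have "ev \<phi> (p@u@[]) = ev \<phi> (p@v@[])"
      by (rule perm) (use less.prems(4,6) tu tv False in auto)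
    then show ?thesis by simp
  next
    case True
    then obtain b t u1 where u: "u = b @ t # u1" and tL: "t \<in> L" and bL: "\<forall>y\<in>set b. y \<notin> L"
      by (rule split_list_first_propE)
    have fu: "filter (\<lambda>z. z\<in>L) u = t # filter (\<lambda>z. z\<in>L) u1" using u tL bL by simp
    then have "filter (\<lambda>z. z\<in>L) v \<noteq> []" using less.prems(3) by simp
    then have "\<exists>z\<in>set v. z \<in> L" by (simp add: filter_empty_conv)
    then obtain b' t' v1 where v: "v = b' @ t' # v1" and tL': "t' \<in> L" and bL': "\<forall>y\<in>set b'. y \<notin> L"
      by (rule split_list_first_propE)
    have fv: "filter (\<lambda>z. z\<in>L) v = t' # filter (\<lambda>z. z\<in>L) v1" using v tL' bL' by simp
    have tt: "t' = t" and f1: "filter (\<lambda>z. z\<in>L) u1 = filter (\<lambda>z. z\<in>L) v1"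
      using fu fv less.prems(3) by auto
    have tbu: "takeWhile (\<lambda>z. z\<notin>L) u = b" using u tL bL by simp
    have tbv: "takeWhile (\<lambda>z. z\<notin>L) v = b'" using v tL' bL' by simp
    have cb: "\<forall>x. count_list b x = count_list b' x" using less.prems(4) tbu tbv by simp
    have tb: "t \<notin> set b" using bL tL by auto
    have tb': "t \<notin> set b'" using bL' tL by auto
    have cu: "count_list u t \<le> 1" "count_list v t \<le> 1" using less.prems(1,2) tL by auto
    have tu1: "t \<notin> set u1" using cu(1) u by (auto simp: count_list_0_iff[symmetric])
    have tv1: "t \<notin> set v1" using cu(2) v tt by (auto simp: count_list_0_iff[symmetric])
    have "ev \<phi> (p@u) = ev \<phi> (p@b@(t#u1))" using u by simp
    also have "\<dots> = ev \<phi> (p@b'@(t#u1))"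
    proof (rule perm)
      show "\<forall>x. count_list b x = count_list b' x" by (rule cb)
      show "\<forall>z\<in>set b. 2 \<le> count_list (p @ b @ t # u1) z"
        using less.prems(6) u bL by auto
    qed
    also have "\<dots> = ev \<phi> ((p@b'@[t])@u1)" by simp
    also have "\<dots> = ev \<phi> ((p@b'@[t])@v1)"
    proof (rule less.hyps)
      show "length u1 < length u" using u by simp
      show "\<forall>t\<in>L. count_list u1 t \<le> 1"
      proof
        fix s assume "s \<in> L"
        then have "count_list u s \<le> 1" using less.prems(1) by blast
        moreover have "count_list u1 s \<le> count_list u s" using u by simp
        ultimately show "count_list u1 s \<le> 1" by linarith
      qed
      show "\<forall>t\<in>L. count_list v1 t \<le> 1"
      proof
        fix s assume "s \<in> L"
        then have "count_list v s \<le> 1" using less.prems(2) by blast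
        moreover have "count_list v1 s \<le> count_list v s" using v by simp
        ultimately show "count_list v1 s \<le> 1" by linarith
      qed
      show "filter (\<lambda>z. z\<in>L) u1 = filter (\<lambda>z. z\<in>L) v1" by (rule f1)
      have "aft L t u = takeWhile (\<lambda>z. z\<notin>L) u1" using u tb aft_split by metis
      moreover have "aft L t v = takeWhile (\<lambda>z. z\<notin>L) v1" using v tt tb' aft_split by metis
      ultimately show "\<forall>x. count_list (takeWhile (\<lambda>z. z\<notin>L) u1) x = count_list (takeWhile (\<lambda>z. z\<notin>L) v1) x"
        using less.prems(5) tL by metis
      show "\<forall>s\<in>L. \<forall>x. count_list (aft L s u1) x = count_list (aft L s v1) x"
      proof (intro ballI allI)
        fix s x assume sL: "s \<in> L"
        show "count_list (aft L s u1) x = count_list (aft L s v1) x"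
        proof (cases "s = t")
          case True
          then show ?thesis using tu1 tv1 aft_notin by metis
        next
          case False
          have sb: "s \<notin> set (b @ [t])" using bL sL False by auto
          have sb': "s \<notin> set (b' @ [t])" using bL' sL False by auto
          have "aft L s u = aft L s u1" using aft_skip[OF sb, of L u1] u by simp
          moreover have "aft L s v = aft L s v1" using aft_skip[OF sb', of L v1] v tt by simp
          ultimately show ?thesis using less.prems(5) sL by metis
        qed
      qed
      show "\<forall>z\<in>set u1. z \<notin> L \<longrightarrow> 2 \<le> count_list ((p @ b' @ [t]) @ u1) z"
      proof (intro ballI impI)
        fix z assume "z \<in> set u1" "z \<notin> L"
        then have "2 \<le> count_list (p@u) z" using less.prems(6) u by auto
        then show "2 \<le> count_list ((p @ b' @ [t]) @ u1) z" using u cb by simp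
      qed
    qed
    also have "\<dots> = ev \<phi> (p@v)" using v tt by simp
    finally show ?thesis .
  qed
qed

lemma reduce_word:
  fixes \<phi> :: "nat \<Rightarrow> 'a"
  assumes "infx (replicate m y) (filter (\<lambda>z. z = y \<or> count_list w z = 1) w)" "count_list w y \<noteq> 1"
  shows "ev \<phi> w = \<phi> y ^ m * ev \<phi> (filter (\<lambda>z. z \<noteq> y) w)"
proof -
  define P where "P = (\<lambda>z. z = y \<or> count_list w z = 1)"
  obtain p' s' where "filter P w = p' @ replicate m y @ s'" using assms(1) unfolding infx_def P_def by blast
  then obtain p r where w: "w = p @ r" and "filter P p = p'" and fr: "filter P r = replicate m y @ s'"
    using filter_split by blast
  then obtain b s where r: "r = b @ s" and fb: "filter P b = replicate m y"
    using filter_split by blast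
  have bnl: "\<forall>z\<in>set b. count_list w z \<ge> 2"
  proof
    fix z assume zb: "z \<in> set b"
    have "count_list w z \<noteq> 1"
    proof
      assume "count_list w z = 1"
      then have "z \<in> set (filter P b)" using zb unfolding P_def by simp
      then have "z = y" using fb by (simp split: if_splits)
      then show False using assms(2) \<open>count_list w z = 1\<close> by simp
    qed
    moreover have "count_list w z \<noteq> 0" using zb w r by (simp add: count_list_0_iff)
    ultimately show "count_list w z \<ge> 2" by linarith
  qed
  define b2 where "b2 = filter (\<lambda>z. z \<noteq> y) b"
  have cnt: "\<forall>x. count_list b x = count_list (replicate m y @ b2) x"
  proof
    fix x
    show "count_list b x = count_list (replicate m y @ b2) x"
    proof (cases "x = y")
      case True
      have "count_list b y = count_list (filter P b) y"
        using count_list_filter[of P b y] unfolding P_def by simp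
      also have "\<dots> = m" using fb by (simp add: count_list_len)
      finally show ?thesis using True unfolding b2_def by (simp add: count_list_filter count_rep)
    next
      case False
      then show ?thesis unfolding b2_def by (simp add: count_list_filter count_rep)
    qed
  qed
  have "ev \<phi> w = ev \<phi> (p @ b @ s)" using w r by simp
  also have "\<dots> = ev \<phi> (p @ (replicate m y @ b2) @ s)"
    by (rule perm) (use cnt bnl w r in auto)
  also have "\<dots> = ev \<phi> (p @ replicate m y @ (b2 @ s))" by simp
  also have "\<dots> = \<phi> y ^ m * ev \<phi> (filter (\<lambda>z. z \<noteq> y) (p @ b2 @ s))" by (rule reduce)
  also have "filter (\<lambda>z. z \<noteq> y) (p @ b2 @ s) = filter (\<lambda>z. z \<noteq> y) w"
    using w r unfolding b2_def by simp
  finally show ?thesis .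
qed


lemma main:
  fixes \<phi> :: "nat \<Rightarrow> 'a"
  shows "T1_sat m u v \<Longrightarrow> ev \<phi> u = ev \<phi> v"
proof (induction "length u" arbitrary: u v rule: less_induct)
  case less
  define L where "L = {x. count_list u x = 1}"
  have T1f: "\<And>P. filter P u = filter P v \<or> testable_sat m (filter P u) (filter P v)"
    using T1_filter[OF less.prems] by blast
  have Lv: "count_list v x = 1 \<longleftrightarrow> count_list u x = 1" for x
  proof -
    let ?A = "filter (\<lambda>z. z = x) u" and ?B = "filter (\<lambda>z. z = x) v"
    have lA: "length ?A = count_list u x" and lB: "length ?B = count_list v x"
      by (simp_all add: count_list_len)
    have AB: "?A = ?B \<or> testable_sat m ?A ?B" by (rule T1f)
    show ?thesis
    proof
      assume "count_list v x = 1"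
      then have "length ?B < m" using lB m2 by simp
      then have "?A = ?B" using AB testable_short[OF testable_sym] by metis
      then show "count_list u x = 1" using lA lB \<open>count_list v x = 1\<close> by simp
    next
      assume "count_list u x = 1"
      then have "length ?A < m" using lA m2 by simp
      then have "?A = ?B" using AB testable_short by metis
      then show "count_list v x = 1" using lA lB \<open>count_list u x = 1\<close> by simp
    qed
  qed
  have Lv': "L = {x. count_list v x = 1}" unfolding L_def using Lv by auto
  show ?case
  proof (cases "\<exists>y. y \<notin> L \<and> infx (replicate m y) (filter (\<lambda>z. z = y \<or> z \<in> L) u)")
    case True
    then obtain y where yL: "y \<notin> L" and iu: "infx (replicate m y) (filter (\<lambda>z. z = y \<or> z \<in> L) u)" by blast
    have iv: "infx (replicate m y) (filter (\<lambda>z. z = y \<or> z \<in> L) v)"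
      using AB_infx[OF T1f iu] by simp
    have fu: "filter (\<lambda>z. z = y \<or> z \<in> L) u = filter (\<lambda>z. z = y \<or> count_list u z = 1) u"
      unfolding L_def by simp
    have fv: "filter (\<lambda>z. z = y \<or> z \<in> L) v = filter (\<lambda>z. z = y \<or> count_list v z = 1) v"
      unfolding Lv' by simp
    have eu: "ev \<phi> u = \<phi> y ^ m * ev \<phi> (filter (\<lambda>z. z \<noteq> y) u)"
      by (rule reduce_word) (use iu fu yL L_def in auto)
    have ev: "ev \<phi> v = \<phi> y ^ m * ev \<phi> (filter (\<lambda>z. z \<noteq> y) v)"
      by (rule reduce_word) (use iv fv yL Lv' in auto)
    have "y \<in> set u"
    proof -
      obtain p s where "filter (\<lambda>z. z = y \<or> z \<in> L) u = p @ replicate m y @ s"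
        using iu unfolding infx_def by blast
      then have "y \<in> set (filter (\<lambda>z. z = y \<or> z \<in> L) u)" using m2 by (cases m) auto
      then show ?thesis by simp
    qed
    then have "length (filter (\<lambda>z. z \<noteq> y) u) < length u" by (simp add: length_filter_less)
    then have "ev \<phi> (filter (\<lambda>z. z \<noteq> y) u) = ev \<phi> (filter (\<lambda>z. z \<noteq> y) v)"
      using less.hyps T1_del[OF less.prems] by blast
    then show ?thesis using eu ev by simp
  next
    case False
    then have noA: "\<And>y. y \<notin> L \<Longrightarrow> \<not> infx (replicate m y) (filter (\<lambda>z. z = y \<or> z \<in> L) u)" by blast
    have noB: "\<not> infx (replicate m y) (filter (\<lambda>z. z = y \<or> z \<in> L) v)" if "y \<notin> L" for y
    proof
      assume "infx (replicate m y) (filter (\<lambda>z. z = y \<or> z \<in> L) v)"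
      moreover have "filter (\<lambda>z. z = y \<or> z \<in> L) v = filter (\<lambda>z. z = y \<or> z \<in> L) u \<or>
          testable_sat m (filter (\<lambda>z. z = y \<or> z \<in> L) v) (filter (\<lambda>z. z = y \<or> z \<in> L) u)"
        using T1f[of "\<lambda>z. z = y \<or> z \<in> L"] testable_sym by metis
      ultimately have "infx (replicate m y) (filter (\<lambda>z. z = y \<or> z \<in> L) u)"
        using AB_infx by auto
      then show False using noA that by blast
    qed
    have Lu: "\<forall>t\<in>L. count_list u t = 1" unfolding L_def by simp
    have Lvv: "\<forall>t\<in>L. count_list v t = 1" unfolding Lv' by simp
    have LsetA: "t \<in> set u" if "t \<in> L" for t using Lu that by (metis count_notin zero_neq_one)
    have LsetB: "t \<in> set v" if "t \<in> L" for t using Lvv that by (metis count_notin zero_neq_one)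
    have fL: "filter (\<lambda>z. z\<in>L) u = filter (\<lambda>z. z\<in>L) v"
    proof -
      let ?A = "filter (\<lambda>z. z\<in>L) u" and ?B = "filter (\<lambda>z. z\<in>L) v"
      have AB: "?A = ?B \<or> testable_sat m ?A ?B" by (rule T1f)
      show ?thesis
      proof (cases "?A = ?B")
        case True then show ?thesis .
      next
        case False
        then have T: "testable_sat m ?A ?B" using AB by simp
        have longA: "m \<le> length ?A" using testable_short[OF T] False by (cases "m \<le> length ?A") auto
        have longB: "m \<le> length ?B" using testable_short[OF testable_sym[OF T]] False by (cases "m \<le> length ?B") auto
        show ?thesis
        proof (rule dist_eq)
          show "distinct ?A"
            by (rule distinct_count) (use Lu in \<open>auto simp: count_list_filter\<close>)
          show "distinct ?B"
            by (rule distinct_count) (use Lvv in \<open>auto simp: count_list_filter\<close>)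
          show "set ?A = set ?B" using LsetA LsetB by auto
          show "hd ?A = hd ?B" if "?A \<noteq> []"
          proof -
            have "take (m-1) ?A = take (m-1) ?B" using T by (simp add: testable_sat_def)
            then have "hd (take (m-1) ?A) = hd (take (m-1) ?B)" by simp
            moreover have "m - 1 > 0" using m2 by simp
            ultimately show ?thesis using longA longB m2
              by (metis hd_take)
          qed
          fix a b assume "infx [a,b] ?A"
          then show "infx [a,b] ?B" using infix_transfer[OF T longA] m2 by simp
        qed
      qed
    qed
    have blocks: "takeWhile (\<lambda>z. z \<notin> L) (filter (\<lambda>z. z = y \<or> z \<in> L) u) =
                    takeWhile (\<lambda>z. z \<notin> L) (filter (\<lambda>z. z = y \<or> z \<in> L) v) \<and>
                  (\<forall>t\<in>L. aft L t (filter (\<lambda>z. z = y \<or> z \<in> L) u) = aft L t (filter (\<lambda>z. z = y \<or> z \<in> L) v))"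
      if yL: "y \<notin> L" for y
    proof (rule runs[OF m2 T1f])
      show "\<forall>z\<in>set (filter (\<lambda>z. z = y \<or> z \<in> L) u). z = y \<or> z \<in> L" by simp
      show "\<forall>z\<in>set (filter (\<lambda>z. z = y \<or> z \<in> L) v). z = y \<or> z \<in> L" by simp
      show "y \<notin> L" by (rule yL)
      show "\<not> infx (replicate m y) (filter (\<lambda>z. z = y \<or> z \<in> L) u)" using noA yL by blast
      show "\<not> infx (replicate m y) (filter (\<lambda>z. z = y \<or> z \<in> L) v)" using noB yL by blast
      show "\<forall>t\<in>L. count_list (filter (\<lambda>z. z = y \<or> z \<in> L) v) t \<le> 1"
        using Lvv by (simp add: count_list_filter)
      show "\<forall>t\<in>L. t \<in> set (filter (\<lambda>z. z = y \<or> z \<in> L) u)" using LsetA by simp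
    qed
    have "ev \<phi> ([]@u) = ev \<phi> ([]@v)"
    proof (rule blockE)
      show "\<forall>t\<in>L. count_list u t \<le> 1" "\<forall>t\<in>L. count_list v t \<le> 1" using Lu Lvv by auto
      show "filter (\<lambda>z. z\<in>L) u = filter (\<lambda>z. z\<in>L) v" by (rule fL)
      show "\<forall>x. count_list (takeWhile (\<lambda>z. z\<notin>L) u) x = count_list (takeWhile (\<lambda>z. z\<notin>L) v) x"
      proof
        fix x
        show "count_list (takeWhile (\<lambda>z. z\<notin>L) u) x = count_list (takeWhile (\<lambda>z. z\<notin>L) v) x"
        proof (cases "x \<in> L")
          case True
          then have "x \<notin> set (takeWhile (\<lambda>z. z\<notin>L) u)" "x \<notin> set (takeWhile (\<lambda>z. z\<notin>L) v)"
            by (auto dest: set_takeWhileD)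
          then show ?thesis by simp
        next
          case False
          let ?P = "\<lambda>z. z = x \<or> z \<in> L"
          have "count_list (takeWhile (\<lambda>z. z\<notin>L) u) x = count_list (filter ?P (takeWhile (\<lambda>z. z\<notin>L) u)) x"
            by (simp add: count_list_filter)
          also have "\<dots> = count_list (takeWhile (\<lambda>z. z\<notin>L) (filter ?P u)) x"
            by (subst filter_takeWhile) auto
          also have "\<dots> = count_list (takeWhile (\<lambda>z. z\<notin>L) (filter ?P v)) x"
            using blocks[OF False] by simp
          also have "\<dots> = count_list (filter ?P (takeWhile (\<lambda>z. z\<notin>L) v)) x"
            by (subst filter_takeWhile) auto
          also have "\<dots> = count_list (takeWhile (\<lambda>z. z\<notin>L) v) x"
            by (simp add: count_list_filter)
          finally show ?thesis .
        qed
      qed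
      show "\<forall>t\<in>L. \<forall>x. count_list (aft L t u) x = count_list (aft L t v) x"
      proof (intro ballI allI)
        fix t x assume tL: "t \<in> L"
        show "count_list (aft L t u) x = count_list (aft L t v) x"
        proof (cases "x \<in> L")
          case True
          then have "x \<notin> set (aft L t u)" "x \<notin> set (aft L t v)"
            unfolding aft_def by (auto dest: set_takeWhileD)
          then show ?thesis by simp
        next
          case False
          let ?P = "\<lambda>z. z = x \<or> z \<in> L"
          have "count_list (aft L t u) x = count_list (filter ?P (aft L t u)) x"
            by (simp add: count_list_filter)
          also have "\<dots> = count_list (aft L t (filter ?P u)) x"
            by (subst filter_aft) (use tL in auto)
          also have "\<dots> = count_list (aft L t (filter ?P v)) x"
            using blocks[OF False] tL by simp
          also have "\<dots> = count_list (filter ?P (aft L t v)) x"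
            by (subst filter_aft) (use tL in auto)
          also have "\<dots> = count_list (aft L t v) x"
            by (simp add: count_list_filter)
          finally show ?thesis .
        qed
      qed
      show "\<forall>z\<in>set u. z \<notin> L \<longrightarrow> 2 \<le> count_list ([] @ u) z"
      proof (intro ballI impI)
        fix z assume "z \<in> set u" "z \<notin> L"
        then have "count_list u z \<noteq> 0" "count_list u z \<noteq> 1"
          unfolding L_def by (auto simp: count_list_0_iff)
        then show "2 \<le> count_list ([] @ u) z" by simp
      qed
    qed
    then show ?thesis by simp
  qed
qed

end

theorem proposition5p3:
  fixes m :: nat and u v :: "nat list"
  assumes "2 \<le> m"
    and "in_E m TYPE('a::monoid_mult)"
    and "T1_sat m u v"
  shows "monoid_sat TYPE('a) u v"
proof -
  interpret EM m "TYPE('a)" by unfold_locales (use assms in auto)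
  show ?thesis unfolding monoid_sat_def using main[OF assms(3)] by blast
qed

end
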